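(* Let $X$ be a real Hilbert space and let $\bar{x},\hat{x}\in X$ be two distinct points. Let $\hat{H}$ be the halfspace $\{\tilde{x}:\langle\bar{x}-\hat{x},\tilde{x}-\hat{x}\rangle\leq0\}$. Suppose that $x\in X$ is such that $\hat{x}$ lies in the halfspace $H:=\{\tilde{x}:\langle\bar{x}-x,\tilde{x}-x\rangle\leq0\}$. Then $\|x-\hat{x}\|\leq\|\bar{x}-\hat{x}\|$ and $d(x,\hat{H})\geq\frac{\|x-\hat{x}\|^{2}}{\|\bar{x}-\hat{x}\|}$.
   Context: $d(y,S)=\inf_{s\in S}\|y-s\|$ denotes the distance from a point $y$ to a set $S$. *)

theory Defs
  imports "HOL-Analysis.Analysis"
begin

end

theory Submission
  imports Defs
begin

theorem proposition4p1:
  fixes xbar xhat x :: "'a::{real_inner, complete_space}"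
  assumes "xbar \<noteq> xhat"
    and "xhat \<in> {y. inner (xbar - x) (y - x) \<le> 0}"
  shows "norm (x - xhat) \<le> norm (xbar - xhat) \<and>
         infdist x {y. inner (xbar - xhat) (y - xhat) \<le> 0} \<ge> (norm (x - xhat))\<^sup>2 / norm (xbar - xhat)"
proof -
  define u where "u = xbar - xhat"
  define v where "v = x - xhat"
  have up: "norm u > 0" using assms(1) by (simp add: u_def)
  have "inner (xbar - x) (xhat - x) \<le> 0" using assms(2) by simp
  moreover have "xbar - x = u - v" "xhat - x = - v" by (simp_all add: u_def v_def)
  ultimately have "inner (u - v) (- v) \<le> 0" by simp
  hence key: "(norm v)\<^sup>2 \<le> inner u v"
    by (simp add: inner_diff_left power2_norm_eq_inner)
  have cs: "inner u v \<le> norm u * norm v" by (rule Cauchy_Schwarz_ineq2[THEN order_trans[OF abs_ge_self]])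
  have nv: "norm v \<le> norm u"
  proof (cases "norm v = 0")
    case True then show ?thesis by simp
  next
    case False
    hence "norm v > 0" by simp
    from key cs have "norm v * norm v \<le> norm u * norm v" by (simp add: power2_eq_square)
    thus ?thesis using \<open>norm v > 0\<close> by simp
  qed
  have lb: "(norm v)\<^sup>2 / norm u \<le> dist x y" if "inner u (y - xhat) \<le> 0" for y
  proof -
    have "inner u (x - y) = inner u v - inner u (y - xhat)"
      by (simp add: v_def inner_diff_right)
    hence "inner u v \<le> inner u (x - y)" using that by simp
    also have "\<dots> \<le> norm u * norm (x - y)"
      by (rule Cauchy_Schwarz_ineq2[THEN order_trans[OF abs_ge_self]])
    finally have "(norm v)\<^sup>2 \<le> norm u * dist x y" using key by (simp add: dist_norm)
    thus ?thesis using up by (simp add: divide_le_eq mult.commute)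
  qed
  have ne: "{y. inner (xbar - xhat) (y - xhat) \<le> 0} \<noteq> {}" using mem_Collect_eq[of xhat] by (metis (mono_tags, lifting) diff_self empty_iff inner_zero_right order_refl)
  have "(norm v)\<^sup>2 / norm u \<le> infdist x {y. inner (xbar - xhat) (y - xhat) \<le> 0}"
    unfolding infdist_notempty[OF ne]
    by (rule cINF_greatest[OF ne]) (use lb in \<open>auto simp: u_def\<close>)
  thus ?thesis using nv by (simp add: u_def v_def)
qed

end
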